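(* Let $\epsilon\in(0,1)$ and let $x\in\{0,1\}^m$ and $y\in\{0,1\}^k$ be independent random variables, each with independent coordinates equal to $1$ with probability $(1-\epsilon)/2$. Then \[ \Pr[\mu_x(y)\ge0]\le\exp\bigl(-\epsilon^3(1-O(\epsilon))k/2\bigr). \]
   Context: Characteristic strings and forks. A characteristic string is $w=w_1\dots w_n\in\{0,1\}^n$; index $i$ is honest if $w_i=0$ and adversarial if $w_i=1$. A fork for $w$ is a rooted tree with edges directed away from the root $r$ and labeling $\ell:V\to\{0,\dots,n\}$ with (F1) $\ell(r)=0$; (F2) labels strictly increasing along directed paths; (F3) each honest index labels exactly one vertex; (F4) for honest $i<j$ the vertex labeled $i$ has strictly smaller depth than the vertex labeled $j$. Write $F\vdash w$. A vertex is honest if it is the root or labeled by an honest index. A tine is a directed path from the root; its length is its number of edges, $\ell(t)$ the label of its last vertex. A fork is closed if every leaf is honest; a closed fork has a unique longest tine $\hat t$. For closed $F\vdash w$ and tine $t$: $\mathrm{gap}(t)=\mathrm{length}(\hat t)-\mathrm{length}(t)$, $\mathrm{reserve}(t)=|\{i:w_i=1,\ i>\ell(t)\}|$, $\mathrm{reach}(t)=\mathrm{reserve}(t)-\mathrm{gap}(t)$. For $w=xy$, tines are disjoint over $y$ if they share no edge terminating at a vertex with label $>|x|$ (a tine may be paired with itself). $\mu_x(F)=\max\min\{\mathrm{reach}(t_1),\mathrm{reach}(t_2)\}$ over pairs disjoint over $y$, and $\mu_x(y)=\max\{\mu_x(F):F\vdash xy\text{ closed}\}$. *)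

theory Defs
  imports "HOL-Probability.Probability" "HOL-Library.Sublist"
begin

(* Characteristic strings: bool lists, True = 1 (adversarial), False = 0 (honest).
   Index i (1-based) refers to w ! (i - 1). *)

definition honest_idx :: "bool list \<Rightarrow> nat \<Rightarrow> bool" where
  "honest_idx w i \<longleftrightarrow> 1 \<le> i \<and> i \<le> length w \<and> \<not> w ! (i - 1)"

definition adv_idx :: "bool list \<Rightarrow> nat \<Rightarrow> bool" where
  "adv_idx w i \<longleftrightarrow> 1 \<le> i \<and> i \<le> length w \<and> w ! (i - 1)"

(* A rooted tree is encoded by Ulam-Harris addresses: a finite prefix-closed set V of
   nat lists; the root is [], edges go from v to v @ [j]; depth = length.
   The tine ending at v is identified with v (its path from the root). *)
definition is_fork :: "bool list \<Rightarrow> nat list set \<Rightarrow> (nat list \<Rightarrow> nat) \<Rightarrow> bool" where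
  "is_fork w V l \<longleftrightarrow>
     finite V \<and> [] \<in> V \<and> (\<forall>v\<in>V. \<forall>u. prefix u v \<longrightarrow> u \<in> V) \<and>
     (\<forall>v\<in>V. l v \<le> length w) \<and>
     l [] = 0 \<and>
     (\<forall>u\<in>V. \<forall>v\<in>V. strict_prefix u v \<longrightarrow> l u < l v) \<and>
     (\<forall>i. honest_idx w i \<longrightarrow> (\<exists>!v. v \<in> V \<and> l v = i)) \<and>
     (\<forall>u\<in>V. \<forall>v\<in>V. honest_idx w (l u) \<and> honest_idx w (l v) \<and> l u < l v
        \<longrightarrow> length u < length v)"

definition honest_vertex :: "bool list \<Rightarrow> (nat list \<Rightarrow> nat) \<Rightarrow> nat list \<Rightarrow> bool" where
  "honest_vertex w l v \<longleftrightarrow> v = [] \<or> honest_idx w (l v)"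

definition closed_fork :: "bool list \<Rightarrow> nat list set \<Rightarrow> (nat list \<Rightarrow> nat) \<Rightarrow> bool" where
  "closed_fork w V l \<longleftrightarrow> is_fork w V l \<and>
     (\<forall>v\<in>V. (\<forall>j. v @ [j] \<notin> V) \<longrightarrow> honest_vertex w l v)"

definition fork_height :: "nat list set \<Rightarrow> nat" where
  "fork_height V = Max (length ` V)"

definition gap :: "nat list set \<Rightarrow> nat list \<Rightarrow> int" where
  "gap V t = int (fork_height V) - int (length t)"

definition reserve :: "bool list \<Rightarrow> (nat list \<Rightarrow> nat) \<Rightarrow> nat list \<Rightarrow> nat" where
  "reserve w l t = card {i. adv_idx w i \<and> i > l t}"

definition reach :: "bool list \<Rightarrow> nat list set \<Rightarrow> (nat list \<Rightarrow> nat) \<Rightarrow> nat list \<Rightarrow> int" where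
  "reach w V l t = int (reserve w l t) - gap V t"

(* tines t1, t2 share no edge terminating at a vertex with label > m;
   the edge terminating at v (v \<noteq> root) lies on tine t iff v is a prefix of t *)
definition disjoint_over :: "nat \<Rightarrow> (nat list \<Rightarrow> nat) \<Rightarrow> nat list \<Rightarrow> nat list \<Rightarrow> bool" where
  "disjoint_over m l t1 t2 \<longleftrightarrow>
     (\<forall>v. v \<noteq> [] \<and> prefix v t1 \<and> prefix v t2 \<longrightarrow> l v \<le> m)"

(* mu_x(F) for w = x @ y with |x| = m *)
definition mu_fork :: "nat \<Rightarrow> bool list \<Rightarrow> nat list set \<Rightarrow> (nat list \<Rightarrow> nat) \<Rightarrow> int" where
  "mu_fork m w V l = Max {min (reach w V l t1) (reach w V l t2) | t1 t2.
      t1 \<in> V \<and> t2 \<in> V \<and> disjoint_over m l t1 t2}"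

definition margin :: "bool list \<Rightarrow> bool list \<Rightarrow> int" where
  "margin x y = Max {mu_fork (length x) (x @ y) V l | V l. closed_fork (x @ y) V l}"

definition bern_list :: "nat \<Rightarrow> real \<Rightarrow> bool list pmf" where
  "bern_list n p = map_pmf (\<lambda>f. map f [0..<n]) (Pi_pmf {..<n} False (\<lambda>_. bernoulli_pmf p))"

end

theory Submission
  imports Defs
begin

lemma bern_list_0: "bern_list 0 p = return_pmf []"
  unfolding bern_list_def by simp

lemma bern_list_step:
  assumes p: "0 \<le> p" "p \<le> 1"
  shows "(\<integral>\<^sup>+w. F w \<partial>bern_list (Suc n) p) =
         (\<integral>\<^sup>+w. ennreal p * F (w @ [True]) + ennreal (1 - p) * F (w @ [False]) \<partial>bern_list n p)"
proof -
  have ins: "{..<Suc n} = insert n {..<n}" by auto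
  have "bern_list (Suc n) p = map_pmf (\<lambda>f. map f [0..<Suc n])
      (map_pmf (\<lambda>(y, f). f(n := y)) (pair_pmf (bernoulli_pmf p) (Pi_pmf {..<n} False (\<lambda>_. bernoulli_pmf p))))"
    unfolding bern_list_def ins by (subst Pi_pmf_insert) auto
  hence "(\<integral>\<^sup>+w. F w \<partial>bern_list (Suc n) p) =
     (\<integral>\<^sup>+z. F (map ((snd z)(n := fst z)) [0..<Suc n]) \<partial>pair_pmf (bernoulli_pmf p) (Pi_pmf {..<n} False (\<lambda>_. bernoulli_pmf p)))"
    by (simp add: case_prod_beta)
  also have "\<dots> = (\<integral>\<^sup>+y. \<integral>\<^sup>+f. F (map f [0..<n] @ [y]) \<partial>Pi_pmf {..<n} False (\<lambda>_. bernoulli_pmf p) \<partial>bernoulli_pmf p)"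
    by (subst nn_integral_pair_pmf') simp
  also have "\<dots> = (\<integral>\<^sup>+f. F (map f [0..<n] @ [True]) \<partial>Pi_pmf {..<n} False (\<lambda>_. bernoulli_pmf p)) * ennreal p
       + (\<integral>\<^sup>+f. F (map f [0..<n] @ [False]) \<partial>Pi_pmf {..<n} False (\<lambda>_. bernoulli_pmf p)) * ennreal (1 - p)"
    using p by (subst nn_integral_bernoulli_pmf) auto
  also have "\<dots> = (\<integral>\<^sup>+w. F (w @ [True]) \<partial>bern_list n p) * ennreal p + (\<integral>\<^sup>+w. F (w @ [False]) \<partial>bern_list n p) * ennreal (1 - p)"
    unfolding bern_list_def by simp
  also have "\<dots> = (\<integral>\<^sup>+w. ennreal p * F (w @ [True]) + ennreal (1 - p) * F (w @ [False]) \<partial>bern_list n p)"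
    by (subst nn_integral_add) (auto simp: nn_integral_cmult mult.commute)
  finally show ?thesis .
qed

definition rstep :: "nat \<Rightarrow> bool \<Rightarrow> nat" where
  "rstep r b = (if b then Suc r else r - 1)"
definition rho_rec :: "bool list \<Rightarrow> nat" where
  "rho_rec w = foldl rstep 0 w"
definition mstep :: "nat \<times> int \<Rightarrow> bool \<Rightarrow> nat \<times> int" where
  "mstep s b = (if b then (Suc (fst s), snd s + 1)
     else (fst s - 1, if 0 < fst s \<and> snd s = 0 then 0 else snd s - 1))"
definition mu_rec :: "bool list \<Rightarrow> bool list \<Rightarrow> int" where
  "mu_rec x y = snd (foldl mstep (rho_rec x, int (rho_rec x)) y)"

lemma fst_fold_mstep: "fst (foldl mstep s y) = foldl rstep (fst s) y"
  by (induct y arbitrary: s) (auto simp: mstep_def rstep_def)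

lemma inv_fold_mstep: "snd s \<le> int (fst s) \<Longrightarrow> snd (foldl mstep s y) \<le> int (fst (foldl mstep s y))"
  by (induct y arbitrary: s) (auto simp: mstep_def)

lemma nn_integral_one_pmf: "(\<integral>\<^sup>+x. 1 \<partial>measure_pmf M) = 1"
  by simp

lemma tail_gen:
  fixes p :: real
  assumes p: "0 \<le> p" "p < 1"
  defines "\<beta> \<equiv> p / (1 - p)"
  assumes base: "\<And>j. (\<integral>\<^sup>+x. of_bool (j \<le> rho_rec x) \<partial>measure_pmf D) \<le> ennreal (\<beta> ^ j)"
  shows "(\<integral>\<^sup>+x. \<integral>\<^sup>+y. of_bool (j \<le> foldl rstep (rho_rec x) y) \<partial>bern_list n p \<partial>D) \<le> ennreal (\<beta> ^ j)"
proof (induct n arbitrary: j)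
  case 0
  then show ?case using base[of j] by (simp add: bern_list_0)
next
  case (Suc n)
  have b0: "0 \<le> \<beta>" using p by (simp add: \<beta>_def)
  show ?case
  proof (cases j)
    case 0
    then show ?thesis by simp
  next
    case (Suc i)
    have pt: "\<And>v::nat. ennreal p * of_bool (Suc i \<le> rstep v True) + ennreal (1 - p) * of_bool (Suc i \<le> rstep v False)
        = ennreal p * of_bool (i \<le> v) + ennreal (1 - p) * of_bool (Suc (Suc i) \<le> v)"
      by (auto simp: rstep_def)
    have "(\<integral>\<^sup>+x. \<integral>\<^sup>+y. of_bool (j \<le> foldl rstep (rho_rec x) y) \<partial>bern_list (Suc n) p \<partial>D)
       = (\<integral>\<^sup>+x. \<integral>\<^sup>+y. ennreal p * of_bool (i \<le> foldl rstep (rho_rec x) y)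
            + ennreal (1 - p) * of_bool (Suc (Suc i) \<le> foldl rstep (rho_rec x) y) \<partial>bern_list n p \<partial>D)"
      using p Suc by (simp add: bern_list_step pt del: of_bool_eq)
    also have "\<dots> = ennreal p * (\<integral>\<^sup>+x. \<integral>\<^sup>+y. of_bool (i \<le> foldl rstep (rho_rec x) y) \<partial>bern_list n p \<partial>D)
       + ennreal (1 - p) * (\<integral>\<^sup>+x. \<integral>\<^sup>+y. of_bool (Suc (Suc i) \<le> foldl rstep (rho_rec x) y) \<partial>bern_list n p \<partial>D)"
      by (simp add: nn_integral_add nn_integral_cmult)
    also have "\<dots> \<le> ennreal p * ennreal (\<beta> ^ i) + ennreal (1 - p) * ennreal (\<beta> ^ Suc (Suc i))"
      by (intro add_mono mult_left_mono Suc.hyps) auto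
    also have "\<dots> = ennreal (p * \<beta> ^ i + (1 - p) * \<beta> ^ Suc (Suc i))"
      using p b0 by (simp add: ennreal_plus ennreal_mult'')
    also have "p * \<beta> ^ i + (1 - p) * \<beta> ^ Suc (Suc i) = \<beta> ^ j"
    proof -
      have ne: "1 - p \<noteq> 0" using p by simp
      have "p + (1 - p) * \<beta>^2 = \<beta>"
      proof -
        have e1: "(1 - p) * (p / (1 - p) * (p / (1 - p))) = p * (p / (1 - p))" using ne by simp
        have e2: "p + p * (p / (1 - p)) = p / (1 - p)" using ne by (simp add: field_simps)
        show ?thesis unfolding \<beta>_def power2_eq_square e1 e2 ..
      qed
      hence "\<beta> ^ i * (p + (1 - p) * \<beta>^2) = \<beta> ^ i * \<beta>" by simp
      thus ?thesis using Suc by (simp add: algebra_simps power2_eq_square)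
    qed
    finally show ?thesis .
  qed
qed

lemma tail_x:
  fixes p :: real
  assumes p: "0 \<le> p" "p < 1"
  shows "(\<integral>\<^sup>+x. of_bool (j \<le> rho_rec x) \<partial>bern_list m p) \<le> ennreal ((p / (1 - p)) ^ j)"
proof -
  have "(\<integral>\<^sup>+x. \<integral>\<^sup>+y. of_bool (j \<le> foldl rstep (rho_rec x) y) \<partial>bern_list m p \<partial>return_pmf []) \<le> ennreal ((p / (1 - p)) ^ j)"
    by (rule tail_gen[OF p]) (auto simp: rho_rec_def)
  thus ?thesis by (simp add: rho_rec_def)
qed

lemma tail_xy:
  fixes p :: real
  assumes p: "0 \<le> p" "p < 1"
  shows "(\<integral>\<^sup>+x. \<integral>\<^sup>+y. of_bool (j \<le> foldl rstep (rho_rec x) y) \<partial>bern_list n p \<partial>bern_list m p) \<le> ennreal ((p / (1 - p)) ^ j)"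
  by (rule tail_gen[OF p tail_x[OF p]])

lemma I1:
  fixes e :: real assumes e: "0 < e" "e \<le> 1/20"
  shows "(1 - e)/2 * (1 + 9/10*e^2)^2 + (1 - (1 - e)/2) \<le> (1 - 4/5*e^3) * (1 + 9/10*e^2)"
proof -
  have a1: "e*(1-e) \<le> 1/20"
  proof -
    have "e*(1-e) \<le> e*1" using e by (intro mult_left_mono) auto
    thus ?thesis using e by linarith
  qed
  have a2: "e^2 \<le> 1/400"
  proof -
    have "e*e \<le> e*(1/20)" using e by (intro mult_left_mono) auto
    moreover have "e*(1/20) \<le> 1/400" using e by simp
    ultimately show ?thesis unfolding power2_eq_square by linarith
  qed
  have b: "(81/200)*(e*(1-e)) + (18/25)*e^2 \<le> 1/10" using a1 a2 by linarith
  have eq: "(1 - e)/2 * (1 + 9/10*e^2)^2 + (1 - (1 - e)/2) - (1 - 4/5*e^3) * (1 + 9/10*e^2)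
        = e^3 * ((81/200)*(e*(1-e)) + (18/25)*e^2 - 1/10)"
    by (simp add: field_simps power2_eq_square power3_eq_cube)
  have "e^3 * ((81/200)*(e*(1-e)) + (18/25)*e^2 - 1/10) \<le> 0" using b e by (simp add: mult_nonneg_nonpos)
  thus ?thesis using eq by simp
qed

definition gam :: "real \<Rightarrow> real" where "gam e = 1 + 9/10*e^2"
definition psi :: "real \<Rightarrow> real" where "psi e = gam e / (1 + e)"
definition lam :: "real \<Rightarrow> real" where "lam e = 1 - 4/5*e^3"
definition Phi :: "real \<Rightarrow> nat \<times> int \<Rightarrow> real" where
  "Phi e s = gam e ^ fst s * psi e ^ nat (- snd s)"

lemma gam_pos: "0 < gam e" unfolding gam_def by (simp add: add_pos_nonneg)
lemma psi_pos: "0 \<le> e \<Longrightarrow> 0 < psi e" unfolding psi_def using gam_pos by simp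
lemma Phi_nonneg: "0 \<le> e \<Longrightarrow> 0 \<le> Phi e s" unfolding Phi_def using gam_pos psi_pos
  by (simp add: less_imp_le)

lemma I3:
  fixes e :: real assumes e: "0 < e" "e \<le> 1/20"
  shows "(1 - e)/2 * (1 + e) + (1 - (1 - e)/2) / (1 + e) \<le> lam e"
proof -
  have "(1 - e)/2 * (1 + e) + (1 - (1 - e)/2) / (1 + e) = 1 - e^2/2"
    using e by (simp add: field_simps power2_eq_square)
  moreover have "e^3 * (4/5) \<le> e^2/2"
  proof -
    have "e^3 * (4/5) = e^2 * (e * 4/5)" by (simp add: power2_eq_square power3_eq_cube)
    also have "\<dots> \<le> e^2 * (1/2)" using e by (intro mult_left_mono) auto
    finally show ?thesis by simp
  qed
  ultimately show ?thesis unfolding lam_def by linarith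
qed

lemma I4:
  fixes e :: real assumes e: "0 < e" "e \<le> 1/20"
  shows "(1 - e)/2 * (1 + e) + (1 - (1 - e)/2) * psi e \<le> lam e"
proof -
  have "(1 - e)/2 * (1 + e) + (1 - (1 - e)/2) * psi e = 1 - e^2/20"
    using e by (simp add: field_simps power2_eq_square psi_def gam_def)
  moreover have "e^3 * (4/5) \<le> e^2/20"
  proof -
    have "e^3 * (4/5) = e^2 * (e * 4/5)" by (simp add: power2_eq_square power3_eq_cube)
    also have "\<dots> \<le> e^2 * (1/20)" using e by (intro mult_left_mono) auto
    finally show ?thesis by simp
  qed
  ultimately show ?thesis unfolding lam_def by linarith
qed

lemma I2:
  fixes e :: real assumes e: "0 < e" "e \<le> 1/20"
  shows "(1 - e)/2 * gam e + (1 - (1 - e)/2) * psi e \<le> lam e"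
proof -
  have "gam e \<le> 1 + e"
  proof -
    have "e^2 \<le> e * 1" unfolding power2_eq_square using e by (intro mult_left_mono) auto
    thus ?thesis unfolding gam_def using e by linarith
  qed
  hence "(1 - e)/2 * gam e \<le> (1 - e)/2 * (1 + e)" using e by (intro mult_left_mono) auto
  thus ?thesis using I4[OF e] by linarith
qed

lemma gam_psi: "0 \<le> e \<Longrightarrow> gam e = (1 + e) * psi e"
  unfolding psi_def by simp

lemma one_step:
  fixes e :: real assumes e: "0 < e" "e \<le> 1/20"
  assumes inv: "snd s \<le> int (fst s)"
  shows "(1 - e)/2 * Phi e (mstep s True) + (1 - (1 - e)/2) * Phi e (mstep s False) \<le> lam e * Phi e s"
proof -
  obtain r u where s: "s = (r, u)" by (cases s)
  define p where "p = (1 - e)/2"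
  define q where "q = 1 - (1 - e)/2"
  define g where "g = gam e"
  define h where "h = psi e"
  define l where "l = lam e"
  have p0: "0 \<le> p" "0 \<le> q" using e by (auto simp: p_def q_def)
  have g0: "0 < g" using gam_pos by (simp add: g_def)
  have h0: "0 < h" using psi_pos e by (simp add: h_def)
  have gh: "g = (1 + e) * h" using gam_psi e by (simp add: g_def h_def)
  have i1: "p * g^2 + q \<le> l * g" using I1[OF e] by (simp add: p_def q_def g_def l_def gam_def lam_def)
  have i2: "p * g + q * h \<le> l" using I2[OF e] by (simp add: p_def q_def g_def h_def l_def)
  have i3: "p * (1 + e) + q / (1 + e) \<le> l" using I3[OF e] by (simp add: p_def q_def l_def)
  have i4: "p * (1 + e) + q * h \<le> l" using I4[OF e] by (simp add: p_def q_def h_def l_def)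
  show ?thesis
  proof (cases "0 \<le> u")
    case True
    show ?thesis
    proof (cases r)
      case 0
      with True inv s have u0: "u = 0" by simp
      have "p * Phi e (mstep s True) + q * Phi e (mstep s False) = p * g + q * h"
        using s 0 u0 by (simp add: mstep_def Phi_def g_def h_def)
      also have "\<dots> \<le> l * Phi e s" using i2 s 0 u0 by (simp add: Phi_def)
      finally show ?thesis by (simp add: p_def q_def l_def)
    next
      case (Suc r')
      have "p * Phi e (mstep s True) + q * Phi e (mstep s False) = g ^ r' * (p * g^2 + q)"
        using s Suc True by (simp add: mstep_def Phi_def g_def algebra_simps power2_eq_square)
      also have "\<dots> \<le> g ^ r' * (l * g)" using i1 g0 by (intro mult_left_mono) auto
      also have "\<dots> = l * Phi e s" using s Suc True by (simp add: Phi_def g_def)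
      finally show ?thesis by (simp add: p_def q_def l_def)
    qed
  next
    case False
    then obtain n' where n: "nat (- u) = Suc n'" by (cases "nat (-u)") auto
    have n1: "nat (- (u + 1)) = n'" using n False by simp
    have n2: "nat (- (u - 1)) = Suc (Suc n')" using n False by simp
    show ?thesis
    proof (cases r)
      case 0
      have "p * Phi e (mstep s True) + q * Phi e (mstep s False) = g * h ^ n' * p + q * h ^ Suc (Suc n')"
        using s 0 False n1 n2 by (simp add: mstep_def Phi_def g_def h_def)
      also have "\<dots> = h ^ Suc n' * (p * (1 + e) + q * h)"
        using gh by (simp add: algebra_simps)
      also have "\<dots> \<le> h ^ Suc n' * l" using i4 h0 by (intro mult_left_mono) auto
      also have "\<dots> = l * Phi e s" using s 0 n by (simp add: Phi_def h_def)
      finally show ?thesis by (simp add: p_def q_def l_def)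
    next
      case (Suc r')
      have "p * Phi e (mstep s True) + q * Phi e (mstep s False)
          = p * (g ^ Suc (Suc r') * h ^ n') + q * (g ^ r' * h ^ Suc (Suc n'))"
        using s Suc False n1 n2 by (simp add: mstep_def Phi_def g_def h_def)
      also have "\<dots> = (g ^ Suc r' * h ^ Suc n') * (p * (1 + e) + q / (1 + e))"
        using gh e h0 by (simp add: field_simps)
      also have "\<dots> \<le> (g ^ Suc r' * h ^ Suc n') * l" using i3 h0 g0 by (intro mult_left_mono) auto
      also have "\<dots> = l * Phi e s" using s Suc n by (simp add: Phi_def g_def h_def)
      finally show ?thesis by (simp add: p_def q_def l_def)
    qed
  qed
qed

lemma supermart:
  fixes e :: real assumes e: "0 < e" "e \<le> 1/20"
  assumes inv: "snd s \<le> int (fst s)"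
  shows "(\<integral>\<^sup>+y. ennreal (Phi e (foldl mstep s y)) \<partial>bern_list n ((1 - e)/2)) \<le> ennreal (lam e ^ n * Phi e s)"
proof (induct n)
  case 0
  then show ?case by (simp add: bern_list_0)
next
  case (Suc n)
  have p: "0 \<le> (1 - e)/2" "(1 - e)/2 \<le> 1" using e by auto
  have l0: "0 \<le> lam e" using e unfolding lam_def
  proof -
    have "e^3 \<le> 1" using e by (simp add: power_le_one)
    thus "0 \<le> 1 - 4/5 * e^3" by simp
  qed
  have pw: "ennreal ((1 - e)/2) * ennreal (Phi e (mstep (foldl mstep s y) True))
      + ennreal (1 - (1 - e)/2) * ennreal (Phi e (mstep (foldl mstep s y) False))
      \<le> ennreal (lam e) * ennreal (Phi e (foldl mstep s y))" for y
  proof -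
    have "ennreal ((1 - e)/2) * ennreal (Phi e (mstep (foldl mstep s y) True))
      + ennreal (1 - (1 - e)/2) * ennreal (Phi e (mstep (foldl mstep s y) False))
      = ennreal ((1 - e)/2 * Phi e (mstep (foldl mstep s y) True)
      + (1 - (1 - e)/2) * Phi e (mstep (foldl mstep s y) False))"
    proof -
      have a: "0 \<le> (1 - e)/2 * Phi e (mstep (foldl mstep s y) True)" using e Phi_nonneg[of e] by simp
      have b: "0 \<le> (1 - (1 - e)/2) * Phi e (mstep (foldl mstep s y) False)" using e Phi_nonneg[of e] by simp
      have m1: "ennreal ((1 - e)/2 * Phi e (mstep (foldl mstep s y) True))
          = ennreal ((1 - e)/2) * ennreal (Phi e (mstep (foldl mstep s y) True))"
        using e Phi_nonneg[of e] by (intro ennreal_mult) auto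
      have m2: "ennreal ((1 - (1 - e)/2) * Phi e (mstep (foldl mstep s y) False))
          = ennreal (1 - (1 - e)/2) * ennreal (Phi e (mstep (foldl mstep s y) False))"
        using e Phi_nonneg[of e] by (intro ennreal_mult) auto
      show ?thesis
        unfolding ennreal_plus[OF a b] m1 m2 ..
    qed
    also have "\<dots> \<le> ennreal (lam e * Phi e (foldl mstep s y))"
      by (intro ennreal_leI one_step[OF e] inv_fold_mstep[OF inv])
    also have "\<dots> = ennreal (lam e) * ennreal (Phi e (foldl mstep s y))"
      using l0 Phi_nonneg[of e] e by (intro ennreal_mult) auto
    finally show ?thesis .
  qed
  have "(\<integral>\<^sup>+y. ennreal (Phi e (foldl mstep s y)) \<partial>bern_list (Suc n) ((1 - e)/2))
      = (\<integral>\<^sup>+y. ennreal ((1 - e)/2) * ennreal (Phi e (mstep (foldl mstep s y) True))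
      + ennreal (1 - (1 - e)/2) * ennreal (Phi e (mstep (foldl mstep s y) False)) \<partial>bern_list n ((1 - e)/2))"
    using p by (simp add: bern_list_step)
  also have "\<dots> \<le> (\<integral>\<^sup>+y. ennreal (lam e) * ennreal (Phi e (foldl mstep s y)) \<partial>bern_list n ((1 - e)/2))"
    by (intro nn_integral_mono pw)
  also have "\<dots> = ennreal (lam e) * (\<integral>\<^sup>+y. ennreal (Phi e (foldl mstep s y)) \<partial>bern_list n ((1 - e)/2))"
    by (simp add: nn_integral_cmult)
  also have "\<dots> \<le> ennreal (lam e) * ennreal (lam e ^ n * Phi e s)"
    by (intro mult_left_mono Suc) auto
  also have "\<dots> = ennreal (lam e * (lam e ^ n * Phi e s))"
    by (rule ennreal_mult[symmetric]) (use l0 Phi_nonneg[of e] e in auto)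
  also have "\<dots> = ennreal (lam e ^ Suc n * Phi e s)" by (simp add: mult.assoc)
  finally show ?case .
qed

lemma rho_rec_le: "foldl rstep r w \<le> r + length w"
proof (induct w arbitrary: r)
  case Nil
  then show ?case by simp
next
  case (Cons a w)
  have "foldl rstep (rstep r a) w \<le> rstep r a + length w" by (rule Cons)
  moreover have "rstep r a \<le> Suc r" by (auto simp: rstep_def)
  ultimately show ?case by simp
qed

lemma length_bern_list: "w \<in> set_pmf (bern_list n p) \<Longrightarrow> length w = n"
  unfolding bern_list_def by auto

lemma geom_telescope: "(g::real) ^ r = 1 + (\<Sum>j<r. (g - 1) * g ^ j)"
  by (induct r) (auto simp: algebra_simps)

lemma geo_bound:
  fixes e :: real assumes e: "0 < e" "e \<le> 1/20"
  defines "g \<equiv> 1 + 9/10*e^2" and "b \<equiv> (1 - e)/(1 + e)"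
  shows "g * b < 1" and "(g - 1) * b / (1 - g * b) \<le> 3/5 * e"
proof -
  define D where "D = 2*e - 9/10*e^2*(1 - e)"
  have ee: "e*e \<le> e/20" using e by (simp add: mult_left_le)
  have e2: "e^2 = e*e" by (simp add: power2_eq_square)
  have Dpos: "0 < D"
  proof -
    have "e^2*(1 - e) \<le> e^2" using e by (simp add: mult_left_le)
    thus ?thesis unfolding D_def using ee e2 e by linarith
  qed
  have ep: "0 < 1 + e" using e by simp
  have gb: "1 - g * b = D / (1 + e)"
    unfolding g_def b_def D_def using ep by (simp add: field_simps power2_eq_square)
  have "0 < D / (1 + e)" using Dpos ep by simp
  thus "g * b < 1" using gb by linarith
  have num: "(g - 1) * b = 9/10*e^2*(1 - e) / (1 + e)"
    unfolding g_def b_def by simp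
  have "(g - 1) * b / (1 - g * b) = 9/10*e^2*(1 - e) / D"
  proof -
    have aux: "\<And>a c d::real. c \<noteq> 0 \<Longrightarrow> (a/c)/(d/c) = a/d" by (simp add: field_simps)
    show ?thesis unfolding num gb using ep by (intro aux) simp
  qed
  also have "\<dots> \<le> 3/5 * e"
  proof -
    have k: "9/10*(1 - e) + 27/50*(e*(1 - e)) \<le> 6/5"
    proof -
      have "e*(1 - e) \<le> e" using e by (simp add: mult_left_le)
      hence "e*(1 - e) \<le> 1/20" using e by linarith
      hence h2: "27/50*(e*(1 - e)) \<le> 27/50*(1/20)" by (intro mult_left_mono) simp_all
      have h1: "9/10*(1 - e) \<le> 9/10" using e by simp
      show ?thesis using h1 h2 by linarith
    qed
    have "9/10*e^2*(1 - e) \<le> 3/5 * e * D"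
    proof -
      have "3/5 * e * D - 9/10*e^2*(1 - e) = e^2 * (6/5 - (9/10*(1 - e) + 27/50*(e*(1 - e))))"
        unfolding D_def by (simp add: field_simps power2_eq_square power3_eq_cube)
      also have "\<dots> \<ge> 0" using k by simp
      finally show ?thesis by simp
    qed
    thus ?thesis using Dpos by (simp add: divide_le_eq)
  qed
  finally show "(g - 1) * b / (1 - g * b) \<le> 3/5 * e" .
qed
lemma prefactor:
  fixes e :: real assumes e: "0 < e" "e \<le> 1/20"
  shows "(\<integral>\<^sup>+x. ennreal (gam e ^ rho_rec x) \<partial>bern_list m ((1 - e)/2)) \<le> ennreal (1 + 3/5 * e)"
proof -
  define p where "p = (1 - e)/2"
  define b where "b = p / (1 - p)"
  define g where "g = gam e"
  have p: "0 \<le> p" "p < 1" using e by (auto simp: p_def)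
  have b_eq: "b = (1 - e) / (1 + e)" using e by (simp add: b_def p_def field_simps)
  have g1: "1 \<le> g" by (simp add: g_def gam_def)
  have b0: "0 \<le> b" using e by (simp add: b_eq)
  have pw: "ennreal (g ^ rho_rec x) \<le> 1 + (\<Sum>j<m. ennreal ((g - 1) * g ^ j) * of_bool (Suc j \<le> rho_rec x))"
    if "x \<in> set_pmf (bern_list m p)" for x
  proof -
    have lx: "rho_rec x \<le> m" using rho_rec_le[of 0 x] length_bern_list[OF that] by (simp add: rho_rec_def)
    have "g ^ rho_rec x = 1 + (\<Sum>j<rho_rec x. (g - 1) * g ^ j)" by (rule geom_telescope)
    also have "(\<Sum>j<rho_rec x. (g - 1) * g ^ j) = (\<Sum>j<m. (g - 1) * g ^ j * of_bool (Suc j \<le> rho_rec x))"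
    proof -
      have "(\<Sum>j<m. (g - 1) * g ^ j * of_bool (Suc j \<le> rho_rec x)) = (\<Sum>j\<in>{..<m} \<inter> {j. j < rho_rec x}. (g - 1) * g ^ j)"
        unfolding sum.inter_restrict[OF finite_lessThan] by (intro sum.cong) (auto simp: Suc_le_eq)
      also have "{..<m} \<inter> {j. j < rho_rec x} = {..<rho_rec x}" using lx by auto
      finally show ?thesis by simp
    qed
    finally have "g ^ rho_rec x = 1 + (\<Sum>j<m. (g - 1) * g ^ j * of_bool (Suc j \<le> rho_rec x))" .
    hence "ennreal (g ^ rho_rec x) = ennreal 1 + ennreal (\<Sum>j<m. (g - 1) * g ^ j * of_bool (Suc j \<le> rho_rec x))"
      using g1 by (simp add: ennreal_plus sum_nonneg)
    also have "ennreal (\<Sum>j<m. (g - 1) * g ^ j * of_bool (Suc j \<le> rho_rec x))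
       = (\<Sum>j<m. ennreal ((g - 1) * g ^ j * of_bool (Suc j \<le> rho_rec x)))"
      using g1 by (subst sum_ennreal[symmetric]) auto
    also have "\<dots> = (\<Sum>j<m. ennreal ((g - 1) * g ^ j) * of_bool (Suc j \<le> rho_rec x))"
      by (intro sum.cong) auto
    finally show ?thesis by simp
  qed
  have "(\<integral>\<^sup>+x. ennreal (g ^ rho_rec x) \<partial>bern_list m p)
      \<le> (\<integral>\<^sup>+x. 1 + (\<Sum>j<m. ennreal ((g - 1) * g ^ j) * of_bool (Suc j \<le> rho_rec x)) \<partial>bern_list m p)"
    using pw by (intro nn_integral_mono_AE) (simp only: AE_measure_pmf_iff, blast)
  also have "\<dots> = 1 + (\<Sum>j<m. ennreal ((g - 1) * g ^ j) * (\<integral>\<^sup>+x. of_bool (Suc j \<le> rho_rec x) \<partial>bern_list m p))"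
  proof -
    have "(\<integral>\<^sup>+x. 1 + (\<Sum>j<m. ennreal ((g - 1) * g ^ j) * of_bool (Suc j \<le> rho_rec x)) \<partial>bern_list m p)
        = (\<integral>\<^sup>+x. 1 \<partial>bern_list m p) + (\<integral>\<^sup>+x. (\<Sum>j<m. ennreal ((g - 1) * g ^ j) * of_bool (Suc j \<le> rho_rec x)) \<partial>bern_list m p)"
      by (rule nn_integral_add) auto
    also have "(\<integral>\<^sup>+x. (\<Sum>j<m. ennreal ((g - 1) * g ^ j) * of_bool (Suc j \<le> rho_rec x)) \<partial>bern_list m p)
        = (\<Sum>j<m. (\<integral>\<^sup>+x. ennreal ((g - 1) * g ^ j) * of_bool (Suc j \<le> rho_rec x) \<partial>bern_list m p))"
      by (rule nn_integral_sum) auto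
    also have "\<dots> = (\<Sum>j<m. ennreal ((g - 1) * g ^ j) * (\<integral>\<^sup>+x. of_bool (Suc j \<le> rho_rec x) \<partial>bern_list m p))"
      by (intro sum.cong refl nn_integral_cmult) auto
    finally show ?thesis by simp
  qed
  also have "\<dots> \<le> 1 + (\<Sum>j<m. ennreal ((g - 1) * g ^ j) * ennreal (b ^ Suc j))"
    by (intro add_mono order_refl sum_mono mult_left_mono tail_x[OF p, unfolded b_def[symmetric]]) auto
  also have "\<dots> = ennreal (1 + (\<Sum>j<m. (g - 1) * b * (g * b) ^ j))"
  proof -
    have "(\<Sum>j<m. ennreal ((g - 1) * g ^ j) * ennreal (b ^ Suc j)) = (\<Sum>j<m. ennreal ((g - 1) * b * (g * b) ^ j))"
      using g1 b0 by (intro sum.cong refl) (simp add: ennreal_mult''[symmetric] power_mult_distrib algebra_simps)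
    also have "\<dots> = ennreal (\<Sum>j<m. (g - 1) * b * (g * b) ^ j)"
      using g1 b0 by (subst sum_ennreal) auto
    finally show ?thesis using g1 b0 by (simp add: ennreal_plus sum_nonneg)
  qed
  also have "\<dots> \<le> ennreal (1 + 3/5 * e)"
  proof (intro ennreal_leI)
    have gb1: "g * b < 1" and gbb: "(g - 1) * b / (1 - g * b) \<le> 3/5 * e"
      using geo_bound[OF e] by (simp_all add: g_def gam_def b_eq)
    have gb0: "0 \<le> g * b" using g1 b0 by simp
    have "(\<Sum>j<m. (g - 1) * b * (g * b) ^ j) = (g - 1) * b * (\<Sum>j<m. (g * b) ^ j)"
      by (simp add: sum_distrib_left)
    also have "(\<Sum>j<m. (g * b) ^ j) \<le> 1 / (1 - g * b)"
    proof -
      have "(\<Sum>j<m. (g * b) ^ j) = (1 - (g * b) ^ m) / (1 - g * b)" using gb1 by (simp add: sum_gp_strict)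
      also have "\<dots> \<le> 1 / (1 - g * b)" using gb1 gb0 by (intro divide_right_mono) auto
      finally show ?thesis .
    qed
    hence "(g - 1) * b * (\<Sum>j<m. (g * b) ^ j) \<le> (g - 1) * b * (1 / (1 - g * b))"
      using g1 b0 by (intro mult_left_mono) auto
    also have "\<dots> \<le> 3/5 * e" using gbb by simp
    finally show "1 + (\<Sum>j<m. (g - 1) * b * (g * b) ^ j) \<le> 1 + 3/5 * e" by simp
  qed
  finally show ?thesis by (simp add: g_def p_def)
qed

lemma one_minus:
  fixes e :: real assumes e: "0 < e" "e \<le> 1/20"
  shows "(\<integral>\<^sup>+x. \<integral>\<^sup>+y. of_bool (0 \<le> mu_rec x y) \<partial>bern_list (Suc k) ((1 - e)/2) \<partial>bern_list m ((1 - e)/2))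
     \<le> ennreal (1 - e)"
proof -
  define p where "p = (1 - e)/2"
  have p: "0 \<le> p" "p < 1" "p \<le> 1" using e by (auto simp: p_def)
  have pw: "ennreal p * of_bool (0 \<le> snd (mstep (foldl mstep (rho_rec x, int (rho_rec x)) y) True))
      + ennreal (1 - p) * of_bool (0 \<le> snd (mstep (foldl mstep (rho_rec x, int (rho_rec x)) y) False))
      \<le> ennreal p + ennreal (1 - p) * of_bool (1 \<le> foldl rstep (rho_rec x) y)" for x y
  proof -
    define S where "S = foldl mstep (rho_rec x, int (rho_rec x)) y"
    have fS: "fst S = foldl rstep (rho_rec x) y" by (simp add: S_def fst_fold_mstep)
    have iS: "snd S \<le> int (fst S)" unfolding S_def by (rule inv_fold_mstep) simp
    have a: "ennreal p * of_bool (0 \<le> snd (mstep S True)) \<le> ennreal p" by (cases "0 \<le> snd (mstep S True)") auto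
    have b: "of_bool (0 \<le> snd (mstep S False)) \<le> (of_bool (1 \<le> fst S) :: ennreal)"
    proof (cases "fst S = 0")
      case True
      hence "snd (mstep S False) < 0" using iS by (simp add: mstep_def)
      thus ?thesis by simp
    next
      case False
      thus ?thesis by (cases "0 \<le> snd (mstep S False)") auto
    qed
    show ?thesis using add_mono[OF a mult_left_mono[OF b]] unfolding S_def fS[unfolded S_def] by simp
  qed
  have "(\<integral>\<^sup>+x. \<integral>\<^sup>+y. of_bool (0 \<le> mu_rec x y) \<partial>bern_list (Suc k) p \<partial>bern_list m p)
      = (\<integral>\<^sup>+x. \<integral>\<^sup>+y. ennreal p * of_bool (0 \<le> snd (mstep (foldl mstep (rho_rec x, int (rho_rec x)) y) True))
      + ennreal (1 - p) * of_bool (0 \<le> snd (mstep (foldl mstep (rho_rec x, int (rho_rec x)) y) False)) \<partial>bern_list k p \<partial>bern_list m p)"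
    using p by (simp add: bern_list_step mu_rec_def)
  also have "\<dots> \<le> (\<integral>\<^sup>+x. \<integral>\<^sup>+y. ennreal p + ennreal (1 - p) * of_bool (1 \<le> foldl rstep (rho_rec x) y) \<partial>bern_list k p \<partial>bern_list m p)"
    by (intro nn_integral_mono pw)
  also have "\<dots> = ennreal p + ennreal (1 - p) * (\<integral>\<^sup>+x. \<integral>\<^sup>+y. of_bool (1 \<le> foldl rstep (rho_rec x) y) \<partial>bern_list k p \<partial>bern_list m p)"
    by (simp add: nn_integral_add nn_integral_cmult)
  also have "\<dots> \<le> ennreal p + ennreal (1 - p) * ennreal ((p / (1 - p)) ^ 1)"
    by (intro add_mono order_refl mult_left_mono tail_xy[OF p(1,2)]) auto
  also have "\<dots> = ennreal (1 - e)"
  proof -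
    have "(1 - p) * (p / (1 - p)) = p" using p by simp
    hence "ennreal (1 - p) * ennreal ((p / (1 - p)) ^ 1) = ennreal p"
      using p by (simp add: ennreal_mult[symmetric])
    moreover have "ennreal (p + p) = ennreal p + ennreal p" by (rule ennreal_plus) (use p in auto)
    ultimately have "ennreal p + ennreal (1 - p) * ennreal ((p / (1 - p)) ^ 1) = ennreal (p + p)"
      by simp
    thus ?thesis by (simp add: p_def)
  qed
  finally show ?thesis by (simp add: p_def)
qed

lemma chain_bound:
  fixes e :: real assumes e: "0 < e" "e \<le> 1/20"
  shows "(\<integral>\<^sup>+x. \<integral>\<^sup>+y. of_bool (0 \<le> mu_rec x y) \<partial>bern_list k ((1 - e)/2) \<partial>bern_list m ((1 - e)/2))
     \<le> ennreal (exp (- (e^3 * real k / 2)))"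
proof (cases k)
  case 0
  have "(\<integral>\<^sup>+x. \<integral>\<^sup>+y. of_bool (0 \<le> mu_rec x y) \<partial>bern_list k ((1 - e)/2) \<partial>bern_list m ((1 - e)/2))
     \<le> (\<integral>\<^sup>+x. \<integral>\<^sup>+y. 1 \<partial>bern_list k ((1 - e)/2) \<partial>bern_list m ((1 - e)/2))"
    by (intro nn_integral_mono) auto
  also have "\<dots> = 1" by simp
  finally show ?thesis using 0 by simp
next
  case (Suc k')
  define p where "p = (1 - e)/2"
  have l0: "0 \<le> lam e"
  proof -
    have "e^3 \<le> 1" using e by (simp add: power_le_one)
    thus ?thesis unfolding lam_def by simp
  qed
  show ?thesis
  proof (cases "real k * e^2 \<le> 2")
    case True
    have "(\<integral>\<^sup>+x. \<integral>\<^sup>+y. of_bool (0 \<le> mu_rec x y) \<partial>bern_list k p \<partial>bern_list m p) \<le> ennreal (1 - e)"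
      using one_minus[OF e] Suc by (simp add: p_def)
    also have "1 - e \<le> exp (- (e^3 * real k / 2))"
    proof -
      have "e^3 * real k / 2 = e * (real k * e^2) / 2" by (simp add: power2_eq_square power3_eq_cube)
      also have "\<dots> \<le> e * 2 / 2" using True e by (intro divide_right_mono mult_left_mono) auto
      finally have "e^3 * real k / 2 \<le> e" by simp
      hence "1 - e \<le> 1 + (- (e^3 * real k / 2))" by simp
      also have "\<dots> \<le> exp (- (e^3 * real k / 2))" by (rule exp_ge_add_one_self)
      finally show ?thesis .
    qed
    hence "ennreal (1 - e) \<le> ennreal (exp (- (e^3 * real k / 2)))" by (rule ennreal_leI)
    finally show ?thesis by (simp add: p_def)
  next
    case False
    have pw: "of_bool (0 \<le> mu_rec x y) \<le> ennreal (Phi e (foldl mstep (rho_rec x, int (rho_rec x)) y))" for x y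
    proof (cases "0 \<le> mu_rec x y")
      case True
      hence "1 \<le> Phi e (foldl mstep (rho_rec x, int (rho_rec x)) y)"
        unfolding mu_rec_def Phi_def using gam_pos[of e]
        by (simp add: gam_def one_le_power)
      thus ?thesis using True by simp
    qed simp
    have "(\<integral>\<^sup>+x. \<integral>\<^sup>+y. of_bool (0 \<le> mu_rec x y) \<partial>bern_list k p \<partial>bern_list m p)
       \<le> (\<integral>\<^sup>+x. \<integral>\<^sup>+y. ennreal (Phi e (foldl mstep (rho_rec x, int (rho_rec x)) y)) \<partial>bern_list k p \<partial>bern_list m p)"
      by (intro nn_integral_mono pw)
    also have "\<dots> \<le> (\<integral>\<^sup>+x. ennreal (lam e ^ k * Phi e (rho_rec x, int (rho_rec x))) \<partial>bern_list m p)"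
      unfolding p_def by (intro nn_integral_mono supermart[OF e]) simp
    also have "\<dots> = (\<integral>\<^sup>+x. ennreal (lam e ^ k) * ennreal (gam e ^ rho_rec x) \<partial>bern_list m p)"
      using l0 gam_pos[of e] by (intro nn_integral_cong) (simp add: Phi_def ennreal_mult less_imp_le)
    also have "\<dots> = ennreal (lam e ^ k) * (\<integral>\<^sup>+x. ennreal (gam e ^ rho_rec x) \<partial>bern_list m p)"
      by (simp add: nn_integral_cmult)
    also have "\<dots> \<le> ennreal (lam e ^ k) * ennreal (1 + 3/5 * e)"
      unfolding p_def by (intro mult_left_mono prefactor[OF e]) auto
    also have "\<dots> = ennreal (lam e ^ k * (1 + 3/5 * e))"
      using l0 e by (simp add: ennreal_mult)
    also have "lam e ^ k * (1 + 3/5 * e) \<le> exp (- (e^3 * real k / 2))"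
    proof -
      have "lam e \<le> exp (- (4/5 * e^3))"
        using exp_ge_add_one_self[of "- (4/5 * e^3)"] unfolding lam_def by simp
      hence "lam e ^ k \<le> exp (- (4/5 * e^3)) ^ k" using l0 by (intro power_mono) auto
      also have "\<dots> = exp (- (4/5 * e^3 * real k))" by (simp add: exp_of_nat_mult[symmetric] algebra_simps)
      finally have A: "lam e ^ k \<le> exp (- (4/5 * e^3 * real k))" .
      have B: "1 + 3/5 * e \<le> exp (3/10 * e^3 * real k)"
      proof -
        have "3/5 * e = e * 2 * (3/10)" by simp
        also have "\<dots> \<le> e * (real k * e^2) * (3/10)" using False e by (intro mult_right_mono mult_left_mono) auto
        also have "\<dots> = 3/10 * e^3 * real k" by (simp add: power2_eq_square power3_eq_cube)
        finally have "3/5 * e \<le> 3/10 * e^3 * real k" .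
        hence "1 + 3/5 * e \<le> 1 + 3/10 * e^3 * real k" by simp
        also have "\<dots> \<le> exp (3/10 * e^3 * real k)" by (rule exp_ge_add_one_self)
        finally show ?thesis .
      qed
      have "lam e ^ k * (1 + 3/5 * e) \<le> exp (- (4/5 * e^3 * real k)) * exp (3/10 * e^3 * real k)"
        using A B l0 e by (intro mult_mono) auto
      also have "\<dots> = exp (- (e^3 * real k / 2))" by (simp add: exp_add[symmetric] algebra_simps)
      finally show ?thesis .
    qed
    hence "ennreal (lam e ^ k * (1 + 3/5 * e)) \<le> ennreal (exp (- (e^3 * real k / 2)))" by (rule ennreal_leI)
    finally show ?thesis by (simp add: p_def)
  qed
qed

lemma prefix_take_eq: "prefix a t \<Longrightarrow> take (length a) t = a"
  by (auto simp: prefix_def)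

lemma prefix_take_take: "k \<le> j \<Longrightarrow> prefix (take k t) (take j t)"
  by (metis min.absorb1 take_is_prefix take_take)

lemma strict_prefix_take: "k < j \<Longrightarrow> j \<le> length t \<Longrightarrow> strict_prefix (take k t) (take j t)"
  by (metis length_take min.absorb2 nat_less_le order_trans prefix_take_take strict_prefixI)

lemma fork_prefix_closed: "is_fork w V l \<Longrightarrow> v \<in> V \<Longrightarrow> prefix u v \<Longrightarrow> u \<in> V"
  unfolding is_fork_def by blast

lemma fork_label_le: "is_fork w V l \<Longrightarrow> v \<in> V \<Longrightarrow> l v \<le> length w"
  unfolding is_fork_def by blast

lemma fork_root: "is_fork w V l \<Longrightarrow> [] \<in> V" and fork_root_label: "is_fork w V l \<Longrightarrow> l [] = 0"
  and fork_finite: "is_fork w V l \<Longrightarrow> finite V"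
  unfolding is_fork_def by blast+

lemma fork_mono: "is_fork w V l \<Longrightarrow> u \<in> V \<Longrightarrow> v \<in> V \<Longrightarrow> strict_prefix u v \<Longrightarrow> l u < l v"
  unfolding is_fork_def by blast

lemma fork_len_label: "is_fork w V l \<Longrightarrow> v \<in> V \<Longrightarrow> length v \<le> l v"
proof (induct v rule: rev_induct)
  case Nil
  then show ?case by simp
next
  case (snoc x xs)
  have xs: "xs \<in> V" using fork_prefix_closed[OF snoc.prems(1,2)] by simp
  have "strict_prefix xs (xs @ [x])" by (simp add: strict_prefix_def)
  hence "l xs < l (xs @ [x])" using fork_mono[OF snoc.prems(1) xs snoc.prems(2)] by blast
  with snoc.hyps[OF snoc.prems(1) xs] show ?case by simp
qed

lemma fork_nonroot_label: "is_fork w V l \<Longrightarrow> v \<in> V \<Longrightarrow> v \<noteq> [] \<Longrightarrow> 0 < l v"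
  using fork_mono[of w V l "[]" v] fork_root[of w V l] fork_root_label[of w V l]
  by (simp add: strict_prefix_def)

lemma fork_height_ge: "is_fork w V l \<Longrightarrow> v \<in> V \<Longrightarrow> length v \<le> fork_height V"
  unfolding fork_height_def using fork_finite by (intro Max_ge) auto

lemma fork_height_in: "is_fork w V l \<Longrightarrow> \<exists>v\<in>V. length v = fork_height V"
proof -
  assume f: "is_fork w V l"
  have "fork_height V \<in> length ` V" unfolding fork_height_def
    using fork_finite[OF f] fork_root[OF f] by (intro Max_in) auto
  thus ?thesis by auto
qed

lemma fork_height_le: "is_fork w V l \<Longrightarrow> fork_height V \<le> length w"
  using fork_height_in fork_len_label fork_label_le by (metis order_trans)

lemma reserve_le: "reserve w l t \<le> length w"
proof -
  have "{i. adv_idx w i \<and> i > l t} \<subseteq> {1..length w}" by (auto simp: adv_idx_def)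
  hence "card {i. adv_idx w i \<and> i > l t} \<le> card {1..length w}" by (intro card_mono) auto
  thus ?thesis by (simp add: reserve_def)
qed

lemma reach_bounds:
  assumes "is_fork w V l" "t \<in> V"
  shows "- int (length w) \<le> reach w V l t" "reach w V l t \<le> int (length w)"
proof -
  have "length t \<le> fork_height V" using fork_height_ge assms by blast
  moreover have "fork_height V \<le> length w" using fork_height_le assms by blast
  ultimately show "- int (length w) \<le> reach w V l t" "reach w V l t \<le> int (length w)"
    using reserve_le[of w l t] unfolding reach_def gap_def by linarith+
qed

lemma mu_fork_in:
  assumes f: "is_fork w V l"
  shows "\<exists>t1 t2. t1 \<in> V \<and> t2 \<in> V \<and> disjoint_over m l t1 t2 \<and>
            mu_fork m w V l = min (reach w V l t1) (reach w V l t2)"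
proof -
  let ?T = "{min (reach w V l t1) (reach w V l t2) | t1 t2. t1 \<in> V \<and> t2 \<in> V \<and> disjoint_over m l t1 t2}"
  have fin: "finite ?T"
  proof (rule finite_subset)
    show "?T \<subseteq> (\<lambda>(a, b). min (reach w V l a) (reach w V l b)) ` (V \<times> V)" by auto
    show "finite ((\<lambda>(a, b). min (reach w V l a) (reach w V l b)) ` (V \<times> V))"
      using fork_finite[OF f] by auto
  qed
  have "disjoint_over m l [] []" by (simp add: disjoint_over_def)
  hence "min (reach w V l []) (reach w V l []) \<in> ?T" using fork_root[OF f] by blast
  hence ne: "?T \<noteq> {}" by blast
  have "mu_fork m w V l \<in> ?T" unfolding mu_fork_def using fin ne by (rule Max_in)
  thus ?thesis by auto
qed

lemma margin_in:
  assumes ex: "\<exists>V l. closed_fork (x @ y) V l"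
  shows "\<exists>V l. closed_fork (x @ y) V l \<and> margin x y = mu_fork (length x) (x @ y) V l"
proof -
  let ?S = "{mu_fork (length x) (x @ y) V l | V l. closed_fork (x @ y) V l}"
  let ?N = "int (length (x @ y))"
  have sub: "?S \<subseteq> {- ?N..?N}"
  proof
    fix z assume "z \<in> ?S"
    then obtain V l where c: "closed_fork (x @ y) V l" and z: "z = mu_fork (length x) (x @ y) V l" by blast
    have f: "is_fork (x @ y) V l" using c by (simp add: closed_fork_def)
    obtain t1 t2 where t: "t1 \<in> V" "t2 \<in> V" "z = min (reach (x @ y) V l t1) (reach (x @ y) V l t2)"
      using mu_fork_in[OF f, of "length x"] z by blast
    show "z \<in> {- ?N..?N}" using reach_bounds[OF f t(1)] reach_bounds[OF f t(2)] t(3) by auto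
  qed
  have "finite ?S" using sub by (rule finite_subset) simp
  moreover have "?S \<noteq> {}" using ex by blast
  ultimately have "margin x y \<in> ?S" unfolding margin_def by (rule Max_in)
  thus ?thesis by blast
qed

lemma hon_snoc_T: "honest_idx (w @ [True]) i = honest_idx w i"
  unfolding honest_idx_def by (cases "i \<le> length w") (auto simp: nth_append)
lemma adv_snoc_T: "adv_idx (w @ [True]) i = (adv_idx w i \<or> i = Suc (length w))"
  unfolding adv_idx_def by (cases "i \<le> length w") (auto simp: nth_append)
lemma hon_snoc_F: "honest_idx (w @ [False]) i = (honest_idx w i \<or> i = Suc (length w))"
  unfolding honest_idx_def by (cases "i \<le> length w") (auto simp: nth_append)
lemma adv_snoc_F: "adv_idx (w @ [False]) i = adv_idx w i"
  unfolding adv_idx_def by (cases "i \<le> length w") (auto simp: nth_append)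

lemma reserve_snoc_F: "reserve (w @ [False]) l t = reserve w l t"
  unfolding reserve_def adv_snoc_F ..

lemma reserve_snoc_T:
  assumes "l t \<le> length w"
  shows "reserve (w @ [True]) l t = Suc (reserve w l t)"
proof -
  have "{i. adv_idx (w @ [True]) i \<and> l t < i} = insert (Suc (length w)) {i. adv_idx w i \<and> l t < i}"
    using assms by (auto simp: adv_snoc_T)
  moreover have "Suc (length w) \<notin> {i. adv_idx w i \<and> l t < i}" by (simp add: adv_idx_def)
  moreover have "finite {i. adv_idx w i \<and> l t < i}"
    by (rule finite_subset[of _ "{..length w}"]) (auto simp: adv_idx_def)
  ultimately show ?thesis unfolding reserve_def by simp
qed

lemma closed_snoc_T:
  assumes c: "closed_fork (w @ [True]) V l"
  shows "closed_fork w V l"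
proof -
  have f: "is_fork (w @ [True]) V l" using c by (simp add: closed_fork_def)
  have lab: "l v \<le> length w" if v: "v \<in> V" for v
  proof (rule ccontr)
    assume "\<not> l v \<le> length w"
    hence lv: "l v = Suc (length w)" using fork_label_le[OF f v] by simp
    have leaf: "\<forall>j. v @ [j] \<notin> V"
    proof (intro allI notI)
      fix j assume vj: "v @ [j] \<in> V"
      have "l v < l (v @ [j])" using fork_mono[OF f v vj] by (simp add: strict_prefix_def)
      thus False using fork_label_le[OF f vj] lv by simp
    qed
    hence "honest_vertex (w @ [True]) l v" using c v by (simp add: closed_fork_def)
    moreover have "v \<noteq> []" using lv fork_root_label[OF f] by auto
    ultimately show False using lv by (simp add: honest_vertex_def honest_idx_def)
  qed
  show ?thesis using c lab unfolding closed_fork_def is_fork_def honest_vertex_def hon_snoc_T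
    by (simp add: hon_snoc_T)
qed

lemma reach_snoc_T:
  assumes c: "closed_fork (w @ [True]) V l" and t: "t \<in> V"
  shows "reach (w @ [True]) V l t = reach w V l t + 1"
proof -
  have "is_fork w V l" using closed_snoc_T[OF c] by (simp add: closed_fork_def)
  hence "l t \<le> length w" using t by (rule fork_label_le)
  thus ?thesis unfolding reach_def using reserve_snoc_T by simp
qed

lemma count_chain:
  assumes f: "is_fork W V l" and t: "t \<in> V" and kK: "ka \<le> K" "K \<le> length t"
    and adv: "\<And>k. ka < k \<Longrightarrow> k \<le> K \<Longrightarrow> adv_idx W (l (take k t))"
  shows "(K - ka) + reserve W l (take K t) \<le> reserve W l (take ka t)"
proof -
  let ?A = "{i. adv_idx W i \<and> l (take ka t) < i}"
  let ?B = "{i. adv_idx W i \<and> l (take K t) < i}"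
  let ?C = "(\<lambda>k. l (take k t)) ` {ka<..K}"
  have inV: "take k t \<in> V" for k using fork_prefix_closed[OF f t take_is_prefix] .
  have mono: "l (take i t) < l (take j t)" if "i < j" "j \<le> length t" for i j
    using fork_mono[OF f inV inV strict_prefix_take[OF that]] .
  have mono': "l (take i t) \<le> l (take j t)" if "i \<le> j" "j \<le> length t" for i j
    using mono[of i j] that by (cases "i = j") auto
  have finA: "finite ?A" by (rule finite_subset[of _ "{..length W}"]) (auto simp: adv_idx_def)
  have CA: "?C \<subseteq> ?A" using adv mono kK by auto
  have BA: "?B \<subseteq> ?A" using mono'[OF kK] by auto
  have CB: "?C \<inter> ?B = {}"
  proof -
    have "l (take k t) \<le> l (take K t)" if "k \<le> K" for k using mono' that kK by simp
    thus ?thesis by force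
  qed
  have injC: "inj_on (\<lambda>k. l (take k t)) {ka<..K}"
  proof (rule inj_onI)
    fix i j assume "i \<in> {ka<..K}" "j \<in> {ka<..K}" "l (take i t) = l (take j t)"
    thus "i = j" using mono[of i j] mono[of j i] kK by (cases i j rule: linorder_cases) auto
  qed
  have cardC: "card ?C = K - ka" using card_image[OF injC] by simp
  have "card (?C \<union> ?B) = card ?C + card ?B"
    using CB finA CA BA by (intro card_Un_disjoint) (auto intro: finite_subset)
  moreover have "card (?C \<union> ?B) \<le> card ?A" using CA BA finA by (intro card_mono) auto
  ultimately show ?thesis unfolding reserve_def using cardC by simp
qed

lemma fork_honest_unique: "is_fork w V l \<Longrightarrow> honest_idx w i \<Longrightarrow> \<exists>!v. v \<in> V \<and> l v = i"
  unfolding is_fork_def by blast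

lemma fork_F4: "is_fork w V l \<Longrightarrow> u \<in> V \<Longrightarrow> v \<in> V \<Longrightarrow> honest_idx w (l u) \<Longrightarrow> honest_idx w (l v)
   \<Longrightarrow> l u < l v \<Longrightarrow> length u < length v"
  unfolding is_fork_def by blast

lemma leaf_prefix_eq:
  assumes f: "is_fork W V l" and leaf: "\<forall>j. z @ [j] \<notin> V" and u: "u \<in> V" and p: "prefix z u"
  shows "u = z"
proof (rule ccontr)
  assume "u \<noteq> z"
  then obtain a r where "u = z @ a # r" using p by (metis prefixE append_Nil2 neq_Nil_conv)
  hence "prefix (z @ [a]) u" by simp
  thus False using fork_prefix_closed[OF f u] leaf by blast
qed

lemma false_case:
  assumes c: "closed_fork (w @ [False]) V l"
  obtains V' z pre where
    "closed_fork w V' l" "z \<in> V" "z \<noteq> []" "l z = Suc (length w)"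
    "\<And>t. t \<in> V \<Longrightarrow> pre t \<in> V' \<and> prefix (pre t) t"
    "\<And>t. t \<in> V \<Longrightarrow> t \<noteq> z \<Longrightarrow> reach (w @ [False]) V l t \<le> reach w V' l (pre t) - 1"
    "reach (w @ [False]) V l z = 0"
    "0 \<le> reach w V' l (pre z)"
proof -
  define w' where "w' = w @ [False]"
  define n where "n = length w"
  have f: "is_fork w' V l" using c by (simp add: closed_fork_def w'_def)
  have lw': "length w' = Suc n" by (simp add: w'_def n_def)
  have hz: "honest_idx w' (Suc n)" by (simp add: w'_def n_def honest_idx_def)
  obtain z where z: "z \<in> V" "l z = Suc n" and zu: "\<And>v. v \<in> V \<Longrightarrow> l v = Suc n \<Longrightarrow> v = z"
    using fork_honest_unique[OF f hz] by blast
  have z0: "z \<noteq> []" using z fork_root_label[OF f] by auto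
  have leaf: "\<forall>j. z @ [j] \<notin> V"
  proof (intro allI notI)
    fix j assume zj: "z @ [j] \<in> V"
    have "l z < l (z @ [j])" using fork_mono[OF f z(1) zj] by (simp add: strict_prefix_def)
    thus False using fork_label_le[OF f zj] z lw' by simp
  qed
  define V' where "V' = {v \<in> V. \<exists>u\<in>V. prefix v u \<and> honest_vertex w' l u \<and> u \<noteq> z}"
  have hv_in: "u \<in> V'" if "u \<in> V" "honest_vertex w' l u" "u \<noteq> z" for u
    using that unfolding V'_def by blast
  have V'V: "V' \<subseteq> V" by (auto simp: V'_def)
  have zV': "z \<notin> V'"
  proof
    assume "z \<in> V'"
    then obtain u where "u \<in> V" "prefix z u" "u \<noteq> z" unfolding V'_def by blast
    thus False using leaf_prefix_eq[OF f leaf] by blast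
  qed
  have hon_label: "l u \<le> n" if "u \<in> V" "honest_vertex w' l u" "u \<noteq> z" for u
  proof (cases "u = []")
    case True thus ?thesis using fork_root_label[OF f] by simp
  next
    case False
    have "l u \<le> Suc n" using fork_label_le[OF f that(1)] lw' by simp
    moreover have "l u \<noteq> Suc n" using zu that by blast
    ultimately show ?thesis by simp
  qed
  have hon_len: "length u < length z" if "u \<in> V" "honest_vertex w' l u" "u \<noteq> z" for u
  proof (cases "u = []")
    case True thus ?thesis using z0 by simp
  next
    case False
    hence "honest_idx w' (l u)" using that by (simp add: honest_vertex_def)
    moreover have "l u < l z" using hon_label[OF that] z by simp
    ultimately show ?thesis using fork_F4[OF f that(1) z(1)] hz z(2) by simp
  qed
  have V'_len: "length v < length z" if vV: "v \<in> V'" for v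
  proof -
    obtain u where "u \<in> V" "prefix v u" "honest_vertex w' l u" "u \<noteq> z" using vV unfolding V'_def by blast
    thus ?thesis using hon_len prefix_length_le by (meson le_less_trans)
  qed
  have H: "fork_height V = length z"
  proof (rule antisym)
    show "length z \<le> fork_height V" using fork_height_ge[OF f z(1)] .
    obtain v where v: "v \<in> V" "length v = fork_height V" using fork_height_in[OF f] by blast
    have vleaf: "\<forall>j. v @ [j] \<notin> V"
    proof (intro allI notI)
      fix j assume "v @ [j] \<in> V"
      hence "length (v @ [j]) \<le> fork_height V" using fork_height_ge[OF f] by blast
      thus False using v by simp
    qed
    hence "honest_vertex w' l v" using c v(1) by (simp add: closed_fork_def w'_def)
    hence "v = z"
      using hon_len[OF v(1)] fork_height_ge[OF f z(1)] v(2) by (cases "v = z") auto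
    thus "fork_height V \<le> length z" using v by simp
  qed
  have hon_w: "honest_idx w' i" if "honest_idx w i" for i using that by (simp add: w'_def hon_snoc_F)
  have hon_w2: "honest_idx w i" if "honest_idx w' i" "i \<le> n" for i
    using that by (simp add: w'_def hon_snoc_F n_def)
  have V'lab: "l v \<le> n" if vV: "v \<in> V'" for v
  proof -
    obtain u where u: "u \<in> V" "prefix v u" "honest_vertex w' l u" "u \<noteq> z" using vV unfolding V'_def by blast
    have "l v \<le> l u"
    proof (cases "v = u")
      case False
      hence "strict_prefix v u" using u by (simp add: strict_prefix_def)
      thus ?thesis using fork_mono[OF f _ u(1)] vV V'V by fastforce
    qed simp
    thus ?thesis using hon_label[OF u(1,3,4)] by simp
  qed
  have fV': "is_fork w V' l"
    unfolding is_fork_def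
  proof (intro conjI ballI allI impI)
    show "finite V'" using fork_finite[OF f] V'V by (rule finite_subset[rotated])
    show "[] \<in> V'" using fork_root[OF f] z0 by (intro hv_in) (auto simp: honest_vertex_def)
    show "u \<in> V'" if vV: "v \<in> V'" and uv: "prefix u v" for v u
    proof -
      obtain u' where u': "u' \<in> V" "prefix v u'" "honest_vertex w' l u'" "u' \<noteq> z" "v \<in> V"
        using vV unfolding V'_def by blast
      have "u \<in> V" using fork_prefix_closed[OF f u'(5) uv] .
      moreover have "prefix u u'" using uv u'(2) by (rule prefix_order.trans)
      ultimately show ?thesis using u' unfolding V'_def by blast
    qed
    show "l v \<le> length w" if "v \<in> V'" for v using V'lab[OF that] by (simp add: n_def)
    show "l [] = 0" by (rule fork_root_label[OF f])
    show "l u < l v" if "u \<in> V'" "v \<in> V'" "strict_prefix u v" for u v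
      using fork_mono[OF f] that V'V by blast
    show "\<exists>!v. v \<in> V' \<and> l v = i" if hi: "honest_idx w i" for i
    proof -
      obtain v where v: "v \<in> V" "l v = i" and vu: "\<And>v'. v' \<in> V \<Longrightarrow> l v' = i \<Longrightarrow> v' = v"
        using fork_honest_unique[OF f hon_w[OF hi]] by blast
      have "i \<le> n" using hi by (simp add: honest_idx_def n_def)
      hence "v \<noteq> z" using v z by auto
      hence "v \<in> V'" using v hon_w[OF hi] by (intro hv_in) (auto simp: honest_vertex_def)
      thus ?thesis using vu V'V v by blast
    qed
    show "length u < length v" if "u \<in> V'" "v \<in> V'"
      "honest_idx w (l u) \<and> honest_idx w (l v) \<and> l u < l v" for u v
      using fork_F4[OF f] that V'V hon_w by blast
  qed
  have cV': "closed_fork w V' l"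
    unfolding closed_fork_def
  proof (intro conjI fV' ballI impI)
    fix v assume v: "v \<in> V'" and vl: "\<forall>j. v @ [j] \<notin> V'"
    obtain u where u: "u \<in> V" "prefix v u" "honest_vertex w' l u" "u \<noteq> z" using v unfolding V'_def by blast
    have "v = u"
    proof (rule ccontr)
      assume "v \<noteq> u"
      then obtain a r where ur: "u = v @ a # r" using u(2) by (metis prefixE append_Nil2 neq_Nil_conv)
      have "prefix (v @ [a]) u" using ur by simp
      hence "v @ [a] \<in> V'" using fork_prefix_closed[OF fV' hv_in[OF u(1,3,4)]] by blast
      thus False using vl by blast
    qed
    thus "honest_vertex w l v" using u hon_label[OF u(1,3,4)] hon_w2
      by (auto simp: honest_vertex_def)
  qed
  have H': "fork_height V' < length z"
    using fork_height_in[OF fV'] V'_len by metis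
  define K where "K t = (GREATEST k. k \<le> length t \<and> take k t \<in> V')" for t
  define pre where "pre t = take (K t) t" for t
  have Kp: "K t \<le> length t \<and> take (K t) t \<in> V'" for t
  proof -
    have "0 \<le> length t \<and> take 0 t \<in> V'" using fork_root[OF fV'] by simp
    hence "(\<lambda>k. k \<le> length t \<and> take k t \<in> V') (Greatest (\<lambda>k. k \<le> length t \<and> take k t \<in> V'))"
      by (rule GreatestI_nat[where b = "length t"]) simp
    thus ?thesis unfolding K_def by simp
  qed
  have Kmax: "take k t \<notin> V'" if kk: "K t < k" "k \<le> length t" for t k
  proof
    assume "take k t \<in> V'"
    hence "k \<le> length t \<and> take k t \<in> V'" using kk by simp
    hence "k \<le> Greatest (\<lambda>k. k \<le> length t \<and> take k t \<in> V')"
      by (rule Greatest_le_nat[where b = "length t"]) simp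
    thus False using kk unfolding K_def by simp
  qed
  have pre_len: "length (pre t) = K t" for t using Kp[of t] by (simp add: pre_def)
  have pre_props: "pre t \<in> V' \<and> prefix (pre t) t" for t using Kp[of t] by (simp add: pre_def take_is_prefix)
  have adv_chain: "adv_idx w' (l (take k t))"
    if t: "t \<in> V" and k: "K t < k" "k \<le> length t" and nz: "take k t \<noteq> z" for t k
  proof -
    have u: "take k t \<in> V" using fork_prefix_closed[OF f t take_is_prefix] .
    have "take k t \<notin> V'" using Kmax[OF k] .
    hence nh: "\<not> honest_vertex w' l (take k t)" using hv_in[OF u _ nz] by blast
    hence ne: "take k t \<noteq> []" by (auto simp: honest_vertex_def)
    have "0 < l (take k t)" using fork_nonroot_label[OF f u ne] .
    moreover have "l (take k t) \<le> length w'" using fork_label_le[OF f u] .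
    ultimately show ?thesis using nh by (auto simp: honest_vertex_def honest_idx_def adv_idx_def)
  qed
  have res_eq: "reserve w' l t = reserve w l t" for t by (simp add: w'_def reserve_snoc_F)
  have reach_t: "reach w' V l t \<le> reach w V' l (pre t) - 1" if t: "t \<in> V" "t \<noteq> z" for t
  proof -
    have nz: "take k t \<noteq> z" if "k \<le> length t" for k
    proof
      assume tz: "take k t = z"
      hence "prefix z t" using take_is_prefix by metis
      thus False using leaf_prefix_eq[OF f leaf t(1)] t(2) by blast
    qed
    have cc: "(length t - K t) + reserve w' l (take (length t) t) \<le> reserve w' l (take (K t) t)"
      using Kp[of t] adv_chain[OF t(1)] nz by (intro count_chain[OF f t(1)]) auto
    hence "int (reserve w' l t) \<le> int (reserve w l (pre t)) - (int (length t) - int (K t))"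
      using Kp[of t] res_eq by (simp add: pre_def)
    moreover have "int (fork_height V') + 1 \<le> int (fork_height V)" using H H' by simp
    ultimately show ?thesis
      unfolding reach_def gap_def using pre_len[of t] by simp
  qed
  have reach_z: "reach w' V l z = 0"
  proof -
    have e: "{i. adv_idx w' i \<and> l z < i} = {}" using z lw' by (auto simp: adv_idx_def)
    have "reserve w' l z = 0" unfolding reserve_def e by simp
    thus ?thesis unfolding reach_def gap_def H by simp
  qed
  have reach_pz: "0 \<le> reach w V' l (pre z)"
  proof -
    have Kz: "K z < length z"
    proof -
      have "K z \<noteq> length z" using Kp[of z] zV' by auto
      thus ?thesis using Kp[of z] by simp
    qed
    have cc: "(length z - 1 - K z) + reserve w' l (take (length z - 1) z) \<le> reserve w' l (take (K z) z)"
      using Kz adv_chain[OF z(1)] by (intro count_chain[OF f z(1)]) auto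
    hence "int (length z) - 1 - int (K z) \<le> int (reserve w l (pre z))"
      using Kz res_eq by (simp add: pre_def)
    thus ?thesis unfolding reach_def gap_def using pre_len[of z] H' by simp
  qed
  show ?thesis
    using that[OF cV' z(1) z0 z(2)[unfolded n_def] pre_props reach_t[unfolded w'_def] reach_z[unfolded w'_def] reach_pz]
    by blast
qed

lemma prefix_replicate: "prefix u (replicate j x) \<Longrightarrow> u = replicate (length u) x \<and> length u \<le> j"
proof -
  assume p: "prefix u (replicate j x)"
  have "set u \<subseteq> set (replicate j x)" using set_mono_prefix[OF p] .
  hence "\<forall>y\<in>set u. y = x" by auto
  hence "replicate (length u) x = u" by (rule replicate_length_same)
  moreover have "length u \<le> j" using prefix_length_le[OF p] by simp
  ultimately show ?thesis by simp
qed

lemma exists_closed_fork: "\<exists>V l. closed_fork w V l"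
proof -
  define hs where "hs = filter (honest_idx w) [1..<Suc (length w)]"
  have sw: "sorted_wrt (<) hs" unfolding hs_def by (intro sorted_wrt_filter sorted_wrt_upt)
  have dh: "distinct hs" using sw by (simp add: strict_sorted_iff)
  have set_hs: "set hs = {i. honest_idx w i}" by (auto simp: hs_def honest_idx_def)
  define f where "f a = (case a of 0 \<Rightarrow> 0 | Suc j \<Rightarrow> hs ! j)" for a
  define lab where "lab v = f (length v)" for v :: "nat list"
  define V where "V = (\<lambda>j. replicate j (0::nat)) ` {..length hs}"
  have fpos: "0 < f a" if aa: "0 < a" "a \<le> length hs" for a
  proof -
    obtain j where a: "a = Suc j" using aa by (cases a) auto
    have "hs ! j \<in> set hs" using aa a by simp
    hence "honest_idx w (hs ! j)" using set_hs by auto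
    thus ?thesis using a by (simp add: f_def honest_idx_def)
  qed
  have fmono: "f a < f b" if ab: "a < b" "b \<le> length hs" for a b
  proof (cases a)
    case 0 thus ?thesis using fpos[of b] ab by (simp add: f_def)
  next
    case (Suc i)
    then obtain j where b: "b = Suc j" using ab by (cases b) auto
    thus ?thesis using Suc ab sorted_wrt_nth_less[OF sw, of i j] by (simp add: f_def)
  qed
  have fhon: "honest_idx w (f a)" if aa: "0 < a" "a \<le> length hs" for a
  proof -
    obtain j where a: "a = Suc j" using aa by (cases a) auto
    have "hs ! j \<in> set hs" using aa a by simp
    thus ?thesis using set_hs a by (auto simp: f_def)
  qed
  have fle: "f a \<le> length w" if "a \<le> length hs" for a
  proof (cases a)
    case (Suc j)
    have "hs ! j \<in> set hs" using that Suc by simp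
    thus ?thesis using set_hs Suc by (auto simp: f_def honest_idx_def)
  qed (simp add: f_def)
  have Vmem: "v \<in> V \<longleftrightarrow> v = replicate (length v) 0 \<and> length v \<le> length hs" for v
    unfolding V_def by (auto intro: image_eqI[where x = "length v"])
  have fV: "is_fork w V lab"
    unfolding is_fork_def
  proof (intro conjI ballI allI impI)
    show "finite V" by (simp add: V_def)
    show "[] \<in> V" by (simp add: Vmem)
    show "u \<in> V" if "v \<in> V" "prefix u v" for v u
      using that prefix_replicate[of u "length v" 0] by (simp add: Vmem)
    show "lab v \<le> length w" if "v \<in> V" for v using that fle by (simp add: Vmem lab_def)
    show "lab [] = 0" by (simp add: lab_def f_def)
    show "lab u < lab v" if "u \<in> V" "v \<in> V" "strict_prefix u v" for u v
      using that fmono prefix_length_less[OF that(3)] by (simp add: Vmem lab_def)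
    show "\<exists>!v. v \<in> V \<and> lab v = i" if hi: "honest_idx w i" for i
    proof -
      have "i \<in> set hs" using hi set_hs by simp
      then obtain j where j: "j < length hs" "hs ! j = i" by (auto simp: in_set_conv_nth)
      let ?v = "replicate (Suc j) (0::nat)"
      have v: "?v \<in> V \<and> lab ?v = i" using j by (simp add: Vmem lab_def f_def)
      moreover have "u = ?v" if "u \<in> V \<and> lab u = i" for u
      proof -
        have u: "u = replicate (length u) 0" "length u \<le> length hs" using that by (auto simp: Vmem)
        have i0: "0 < i" using hi by (simp add: honest_idx_def)
        have ul: "lab u = i" using that by simp
        then obtain k where k: "length u = Suc k" using i0 by (cases "length u") (auto simp: lab_def f_def)
        have "hs ! k = hs ! j" using that k j by (simp add: lab_def f_def)
        hence "k = j" using nth_eq_iff_index_eq[OF dh] k u(2) j(1) by simp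
        thus ?thesis using u(1) k by simp
      qed
      ultimately show ?thesis by blast
    qed
    show "length u < length v" if "u \<in> V" "v \<in> V" "honest_idx w (lab u) \<and> honest_idx w (lab v) \<and> lab u < lab v" for u v
    proof (rule ccontr)
      assume "\<not> length u < length v"
      hence "length v \<le> length u" by simp
      hence "f (length v) \<le> f (length u)" using fmono[of "length v" "length u"] that by (cases "length v = length u") (auto simp: Vmem)
      thus False using that by (simp add: lab_def)
    qed
  qed
  have "closed_fork w V lab"
    unfolding closed_fork_def
  proof (intro conjI fV ballI impI)
    fix v assume v: "v \<in> V" and leaf: "\<forall>j. v @ [j] \<notin> V"
    have vr: "v = replicate (length v) 0" "length v \<le> length hs" using v by (auto simp: Vmem)
    have "length v = length hs"
    proof (rule ccontr)
      assume "length v \<noteq> length hs"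
      hence "v @ [0] \<in> V" using vr by (simp add: Vmem) (metis replicate_append_same)
      thus False using leaf by blast
    qed
    thus "honest_vertex w lab v"
      using fhon[of "length v"] by (cases "length v = 0") (auto simp: honest_vertex_def lab_def)
  qed
  thus ?thesis by blast
qed

lemma rho_rec_snoc: "rho_rec (w @ [b]) = rstep (rho_rec w) b"
  by (simp add: rho_rec_def)

lemma disjoint_prefix: "disjoint_over m l t1 t2 \<Longrightarrow> prefix a1 t1 \<Longrightarrow> prefix a2 t2 \<Longrightarrow> disjoint_over m l a1 a2"
  unfolding disjoint_over_def by (meson prefix_order.trans)

lemma disjoint_sym: "disjoint_over m l t1 t2 = disjoint_over m l t2 t1"
  unfolding disjoint_over_def by blast

lemma reach_le_rho:
  "closed_fork w V l \<Longrightarrow> t \<in> V \<Longrightarrow> reach w V l t \<le> int (rho_rec w)"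
proof (induct w arbitrary: V l t rule: rev_induct)
  case Nil
  have f: "is_fork [] V l" using Nil by (simp add: closed_fork_def)
  have "reserve [] l t = 0" by (simp add: reserve_def adv_idx_def)
  moreover have "length t \<le> fork_height V" using fork_height_ge[OF f Nil(2)] .
  ultimately show ?case by (simp add: reach_def gap_def rho_rec_def)
next
  case (snoc b w)
  show ?case
  proof (cases b)
    case True
    have c: "closed_fork (w @ [True]) V l" using snoc True by simp
    have "reach (w @ [True]) V l t = reach w V l t + 1" using reach_snoc_T[OF c snoc(3)] .
    moreover have "reach w V l t \<le> int (rho_rec w)" using snoc(1)[OF closed_snoc_T[OF c] snoc(3)] .
    ultimately show ?thesis using True by (simp add: rho_rec_snoc rstep_def)
  next
    case False
    have c: "closed_fork (w @ [False]) V l" using snoc False by simp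
    obtain V' z pre where V': "closed_fork w V' l" and z: "z \<in> V"
      and pre: "\<And>t. t \<in> V \<Longrightarrow> pre t \<in> V' \<and> prefix (pre t) t"
      and rt: "\<And>t. t \<in> V \<Longrightarrow> t \<noteq> z \<Longrightarrow> reach (w @ [False]) V l t \<le> reach w V' l (pre t) - 1"
      and rz: "reach (w @ [False]) V l z = 0"
      using false_case[OF c] by metis
    show ?thesis
    proof (cases "t = z")
      case True thus ?thesis using rz False by simp
    next
      case tz: False
      have "reach w V' l (pre t) \<le> int (rho_rec w)" using snoc(1)[OF V'] pre[OF snoc(3)] by blast
      thus ?thesis using rt[OF snoc(3) tz] False by (simp add: rho_rec_snoc rstep_def)
    qed
  qed
qed

lemma mu_rec_snoc: "mu_rec x (y @ [b]) = snd (mstep (rho_rec (x @ y), mu_rec x y) b)"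
proof -
  have "fst (foldl mstep (rho_rec x, int (rho_rec x)) y) = rho_rec (x @ y)"
    by (simp add: fst_fold_mstep rho_rec_def)
  thus ?thesis unfolding mu_rec_def by (simp add: prod_eq_iff)
    (metis prod.collapse)
qed

lemma key_lemma:
  "closed_fork (x @ y) V l \<Longrightarrow> t1 \<in> V \<Longrightarrow> t2 \<in> V \<Longrightarrow> disjoint_over (length x) l t1 t2
   \<Longrightarrow> min (reach (x @ y) V l t1) (reach (x @ y) V l t2) \<le> mu_rec x y"
proof (induct y arbitrary: V l t1 t2 rule: rev_induct)
  case Nil
  have "reach x V l t1 \<le> int (rho_rec x)" using reach_le_rho Nil by simp
  thus ?case by (simp add: mu_rec_def)
next
  case (snoc b y)
  define w where "w = x @ y"
  define R where "R = rho_rec w"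
  define \<mu> where "\<mu> = mu_rec x y"
  have ms: "mu_rec x (y @ [b]) = snd (mstep (R, \<mu>) b)" by (simp add: mu_rec_snoc R_def \<mu>_def w_def)
  show ?case
  proof (cases b)
    case True
    have c: "closed_fork (w @ [True]) V l" using snoc True by (simp add: w_def)
    have "min (reach w V l t1) (reach w V l t2) \<le> \<mu>"
      using snoc(1)[OF closed_snoc_T[OF c, unfolded w_def] snoc(3,4,5)] by (simp add: \<mu>_def w_def)
    thus ?thesis using reach_snoc_T[OF c snoc(3)] reach_snoc_T[OF c snoc(4)] True ms
      by (simp add: w_def mstep_def)
  next
    case False
    have c: "closed_fork (w @ [False]) V l" using snoc False by (simp add: w_def)
    obtain V' z pre where V': "closed_fork w V' l" and z: "z \<in> V" "z \<noteq> []" "l z = Suc (length w)"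
      and pre: "\<And>t. t \<in> V \<Longrightarrow> pre t \<in> V' \<and> prefix (pre t) t"
      and rt: "\<And>t. t \<in> V \<Longrightarrow> t \<noteq> z \<Longrightarrow> reach (w @ [False]) V l t \<le> reach w V' l (pre t) - 1"
      and rz: "reach (w @ [False]) V l z = 0"
      and rpz: "0 \<le> reach w V' l (pre z)"
      using false_case[OF c] by metis
    have IH: "min (reach w V' l a1) (reach w V' l a2) \<le> \<mu>"
      if "a1 \<in> V'" "a2 \<in> V'" "disjoint_over (length x) l a1 a2" for a1 a2
      using snoc(1)[OF V'[unfolded w_def] that] by (simp add: \<mu>_def w_def)
    have RL: "reach w V' l a \<le> int R" if "a \<in> V'" for a using reach_le_rho[OF V' that] by (simp add: R_def)
    have G: "snd (mstep (R, \<mu>) False) = (if 0 < R \<and> \<mu> = 0 then 0 else \<mu> - 1)" by (simp add: mstep_def)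
    have eqw: "x @ y @ [b] = w @ [False]" using False by (simp add: w_def)
    have d: "disjoint_over (length x) l t1 t2" by (rule snoc(5))
    have notzz: "\<not> (t1 = z \<and> t2 = z)"
    proof
      assume "t1 = z \<and> t2 = z"
      hence "disjoint_over (length x) l z z" using d by simp
      thus False using z by (auto simp: disjoint_over_def w_def)
    qed
    have d': "disjoint_over (length x) l (pre t1) (pre t2)"
      using disjoint_prefix[OF d] pre snoc(3,4) by blast
    have zcase: "min 0 (reach (w @ [False]) V l t) \<le> snd (mstep (R, \<mu>) False)"
      if t: "t \<in> V" "t \<noteq> z" and dz: "disjoint_over (length x) l z t" for t
    proof -
      have dd: "disjoint_over (length x) l (pre z) (pre t)" using disjoint_prefix[OF dz] pre z(1) t(1) by blast
      have i1: "min (reach w V' l (pre z)) (reach w V' l (pre t)) \<le> \<mu>" using IH pre z(1) t(1) dd by blast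
      have i2: "reach w V' l (pre t) \<le> int R" using RL pre t(1) by blast
      have i3: "reach (w @ [False]) V l t \<le> reach w V' l (pre t) - 1" using rt[OF t] .
      show ?thesis unfolding G using i1 i2 i3 rpz by (auto simp: min_def split: if_splits)
    qed
    have "min (reach (w @ [False]) V l t1) (reach (w @ [False]) V l t2) \<le> snd (mstep (R, \<mu>) False)"
    proof (cases "t1 = z")
      case True
      hence t2: "t2 \<noteq> z" using notzz by blast
      show ?thesis using zcase[OF snoc(4) t2] d True rz by simp
    next
      case t1: False
      show ?thesis
      proof (cases "t2 = z")
        case True
        have "disjoint_over (length x) l z t1" using d True disjoint_sym by blast
        thus ?thesis using zcase[OF snoc(3) t1] True rz by (simp add: min.commute)
      next
        case t2: False
        have i1: "min (reach w V' l (pre t1)) (reach w V' l (pre t2)) \<le> \<mu>" using IH pre snoc(3,4) d' by blast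
        show ?thesis unfolding G using i1 rt[OF snoc(3) t1] rt[OF snoc(4) t2]
          by (auto simp: min_def split: if_splits)
      qed
    qed
    thus ?thesis using ms False by (simp add: w_def)
  qed
qed

lemma margin_le: "margin x y \<le> mu_rec x y"
proof -
  obtain V l where c: "closed_fork (x @ y) V l" and m: "margin x y = mu_fork (length x) (x @ y) V l"
    using margin_in[OF exists_closed_fork] by blast
  have f: "is_fork (x @ y) V l" using c by (simp add: closed_fork_def)
  obtain t1 t2 where t: "t1 \<in> V" "t2 \<in> V" "disjoint_over (length x) l t1 t2"
    and e: "mu_fork (length x) (x @ y) V l = min (reach (x @ y) V l t1) (reach (x @ y) V l t2)"
    using mu_fork_in[OF f] by blast
  show ?thesis using key_lemma[OF c t] m e by simp
qed

theorem mainTheorem14: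
  "\<exists>C::real. \<forall>\<epsilon>::real. 0 < \<epsilon> \<and> \<epsilon> < 1 \<longrightarrow> (\<forall>m k::nat.
     measure_pmf.prob (pair_pmf (bern_list m ((1 - \<epsilon>) / 2)) (bern_list k ((1 - \<epsilon>) / 2)))
       {(x, y). margin x y \<ge> 0}
     \<le> exp (- (\<epsilon> ^ 3 * (1 - C * \<epsilon>) * real k / 2)))"
proof (intro exI[of _ 20] allI impI)
  fix e :: real and m k :: nat
  assume e: "0 < e \<and> e < 1"
  define M where "M = pair_pmf (bern_list m ((1 - e) / 2)) (bern_list k ((1 - e) / 2))"
  define S where "S = {(x, y). margin x y \<ge> 0}"
  show "measure_pmf.prob (pair_pmf (bern_list m ((1 - e) / 2)) (bern_list k ((1 - e) / 2))) {(x, y). margin x y \<ge> 0}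
     \<le> exp (- (e ^ 3 * (1 - 20 * e) * real k / 2))"
  proof (cases "e \<le> 1/20")
    case False
    have "measure_pmf.prob M S \<le> 1" by simp
    also have "1 \<le> exp (- (e ^ 3 * (1 - 20 * e) * real k / 2))"
    proof -
      have "e ^ 3 * (1 - 20 * e) * real k \<le> 0"
        using False e by (intro mult_nonpos_nonneg mult_nonneg_nonpos) auto
      thus ?thesis by simp
    qed
    finally show ?thesis by (simp add: M_def S_def)
  next
    case True
    have e': "0 < e" "e \<le> 1/20" using e True by auto
    have "ennreal (measure_pmf.prob M S) = emeasure (measure_pmf M) S"
      by (simp add: measure_pmf.emeasure_eq_measure)
    also have "\<dots> = (\<integral>\<^sup>+z. indicator S z \<partial>M)" by simp
    also have "\<dots> = (\<integral>\<^sup>+x. \<integral>\<^sup>+y. indicator S (x, y) \<partial>bern_list k ((1 - e) / 2) \<partial>bern_list m ((1 - e) / 2))"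
      unfolding M_def by (rule nn_integral_pair_pmf')
    also have "\<dots> \<le> (\<integral>\<^sup>+x. \<integral>\<^sup>+y. of_bool (0 \<le> mu_rec x y) \<partial>bern_list k ((1 - e) / 2) \<partial>bern_list m ((1 - e) / 2))"
    proof (intro nn_integral_mono)
      fix x y
      show "indicator S (x, y) \<le> (of_bool (0 \<le> mu_rec x y) :: ennreal)"
        using margin_le[of x y] by (auto simp: S_def indicator_def)
    qed
    also have "\<dots> \<le> ennreal (exp (- (e^3 * real k / 2)))" by (rule chain_bound[OF e'])
    finally have "measure_pmf.prob M S \<le> exp (- (e^3 * real k / 2))"
      by (simp add: ennreal_le_iff)
    also have "\<dots> \<le> exp (- (e ^ 3 * (1 - 20 * e) * real k / 2))"
    proof -
      have "e ^ 3 * (1 - 20 * e) * real k \<le> e^3 * 1 * real k"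
        using e' by (intro mult_right_mono mult_left_mono) auto
      thus ?thesis by simp
    qed
    finally show ?thesis by (simp add: M_def S_def)
  qed
qed

end
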